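(* Given any pair $\mathbf v=(v_1,v_2)$ with $1\ge v_1>v_2\ge 0$, there is one and only one real cubic polynomial $f$ with $f(0)=0$ and $f(1)=1$ which has two critical points $c_1<c_2$ in the open interval $(0,1)$ with critical values $f(c_1)=v_1$ and $f(c_2)=v_2$. *)

theory Defs
  imports "HOL-Computational_Algebra.Polynomial"
begin

end

theory Submission
  imports Defs
begin

definition gg :: "real \<Rightarrow> real" where "gg x = 2*x^3 + 3*x^2"

lemma gg_less: assumes "0 \<le> x" "x < y" shows "gg x < gg y"
proof -
  have "x^3 < y^3" using assms by (intro power_strict_mono) auto
  moreover have "x^2 < y^2" using assms by (intro power_strict_mono) auto
  ultimately show ?thesis unfolding gg_def by simp
qed

lemma gg_inj: assumes "0 \<le> x" "0 \<le> y" "gg x = gg y" shows "x = y"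
  using gg_less[of x y] gg_less[of y x] assms by (cases x y rule: linorder_cases) auto

lemma gg_surj: assumes "0 < r" shows "\<exists>x>0. gg x = r"
proof -
  have c: "\<forall>x. 0 \<le> x \<and> x \<le> r + 1 \<longrightarrow> isCont gg x" unfolding gg_def by (auto intro!: continuous_intros)
  have "gg 0 \<le> r" using assms by (simp add: gg_def)
  moreover have "r \<le> gg (r+1)"
  proof -
    have "(r+1)^2 \<ge> r + 1" using assms by (simp add: power2_eq_square)
    moreover have "(r+1)^3 \<ge> 0" using assms by simp
    moreover have "\<And>A B. r+1 \<le> A \<Longrightarrow> 0 \<le> B \<Longrightarrow> r \<le> 3*A + 2*B" using assms by linarith
    ultimately have "r \<le> 3*(r+1)^2 + 2*(r+1)^3" by blast
    then show ?thesis unfolding gg_def by simp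
  qed
  ultimately obtain x where x: "0 \<le> x" "x \<le> r+1" "gg x = r"
    using IVT[of gg 0 r "r+1"] c assms by auto
  have "x \<noteq> 0" using x assms by (auto simp: gg_def)
  then have "x > 0" using x by auto
  then show ?thesis using x(3) by blast
qed

lemma deg3_eq: fixes f :: "real poly" assumes "degree f = 3"
  shows "f = [:coeff f 0, coeff f 1, coeff f 2, coeff f 3:]"
proof (rule poly_eqI)
  fix n show "coeff f n = coeff [:coeff f 0, coeff f 1, coeff f 2, coeff f 3:] n"
  proof (cases "n > 3")
    case True then show ?thesis using assms by (simp add: coeff_eq_0 coeff_pCons split: nat.split)
  next
    case False then have "n = 0 \<or> n = 1 \<or> n = 2 \<or> n = 3" by auto
    then show ?thesis by (auto simp: numeral_eq_Suc)
  qed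
qed

lemma params:
  fixes f :: "real poly" and v1 v2 c1 c2 :: real
  assumes deg: "degree f = 3" and f0: "poly f 0 = 0" and f1: "poly f 1 = 1"
    and c: "0 < c1" "c1 < c2" "c2 < 1"
    and d1: "poly (pderiv f) c1 = 0" and d2: "poly (pderiv f) c2 = 0"
    and v1: "poly f c1 = v1" and v2: "poly f c2 = v2"
  shows "f = [:0, 3*coeff f 3*c1*c2, -3/2*coeff f 3*(c1+c2), coeff f 3:]"
    and "coeff f 3 * (c2-c1)^3 = 2*(v1-v2)"
    and "coeff f 3 * (c2-c1)^3 * gg (c1/(c2-c1)) = 2*v1"
    and "coeff f 3 * (c2-c1)^3 * gg ((1-c2)/(c2-c1)) = 2*(1-v2)"
proof -
  define a0 a1 a2 a3 where "a0 = coeff f 0" "a1 = coeff f 1" "a2 = coeff f 2" "a3 = coeff f 3"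
  have fe: "f = [:a0,a1,a2,a3:]" using deg3_eq[OF deg] a0_a1_a2_a3_def by simp
  have pf: "\<And>x. poly f x = a0 + a1*x + a2*x^2 + a3*x^3" by (subst fe) (simp add: algebra_simps power2_eq_square power3_eq_cube)
  have pd: "\<And>x. poly (pderiv f) x = a1 + 2*a2*x + 3*a3*x^2" by (subst fe) (simp add: pderiv_pCons algebra_simps power2_eq_square)
  have A0: "a0 = 0" using f0 pf[of 0] by simp
  have e1: "a1 + 2*a2*c1 + 3*a3*c1^2 = 0" using d1 pd by simp
  have e2: "a1 + 2*a2*c2 + 3*a3*c2^2 = 0" using d2 pd by simp
  have "(c1 - c2) * (2*a2 + 3*a3*(c1+c2)) = 0" using e1 e2 by (simp add: algebra_simps power2_eq_square)
  then have A2: "a2 = -3/2*a3*(c1+c2)" using c by simp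
  have A1: "a1 = 3*a3*c1*c2" using e1 A2 by (simp add: algebra_simps power2_eq_square)
  show "f = [:0, 3*coeff f 3*c1*c2, -3/2*coeff f 3*(c1+c2), coeff f 3:]"
    using fe A0 A1 A2 a0_a1_a2_a3_def by simp
  define d where "d = c2 - c1"
  have dpos: "d > 0" using c d_def by simp
  define x where "x = c1/d"
  define y where "y = (1-c2)/d"
  have cx: "c1 = x*d" using dpos x_def by simp
  have cy: "c2 = 1 - y*d" using dpos y_def by simp
  have c2x: "c2 = x*d + d" using cx d_def by simp
  have V1: "2*v1 = a3*d^3*gg x"
  proof -
    have "2*poly f c1 = a3*c1^2*(3*c2-c1)"
      unfolding pf A0 A1 A2 by (simp add: algebra_simps power2_eq_square power3_eq_cube)
    also have "\<dots> = a3*d^3*gg x" unfolding gg_def cx c2x by (simp add: algebra_simps power2_eq_square power3_eq_cube)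
    finally show ?thesis using v1 by simp
  qed
  have V2: "2*v2 = 2*v1 - a3*d^3"
  proof -
    have "2*(poly f c1 - poly f c2) = a3*(c2-c1)^3"
      unfolding pf A0 A1 A2 by (simp add: field_simps power2_eq_square power3_eq_cube)
    then show ?thesis using v1 v2 d_def by simp
  qed
  have V3: "2*(1-v2) = a3*d^3*gg y"
  proof -
    have "2*(1 - v2) = 2*(poly f 1 - poly f c2)" using f1 v2 by simp
    also have "\<dots> = a3*(1-c2)^2*(2*(1-c2) + 3*(c2-c1))"
      unfolding pf A0 A1 A2 by (simp add: field_simps power2_eq_square power3_eq_cube)
    also have "\<dots> = a3*(y*d)^2*(2*(y*d) + 3*d)"
    proof -
      have t: "1 - c2 = y*d" using cy by simp
      have dd: "c2 - c1 = d" using d_def by simp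
      show ?thesis unfolding t dd by simp
    qed
    also have "\<dots> = a3*d^3*gg y" unfolding gg_def by (simp add: algebra_simps power2_eq_square power3_eq_cube)
    finally show ?thesis .
  qed
  show "coeff f 3 * (c2-c1)^3 = 2*(v1-v2)" using V2 a0_a1_a2_a3_def d_def by simp
  show "coeff f 3 * (c2-c1)^3 * gg (c1/(c2-c1)) = 2*v1" using V1 a0_a1_a2_a3_def d_def x_def by simp
  show "coeff f 3 * (c2-c1)^3 * gg ((1-c2)/(c2-c1)) = 2*(1-v2)" using V3 a0_a1_a2_a3_def d_def y_def by simp
qed

lemma form_ids:
  fixes k c1 c2 :: real
  defines "P \<equiv> [:0, 3*k*c1*c2, -3/2*k*(c1+c2), k:]"
  shows "2*poly P c1 = k*c1^2*(3*c2-c1)"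
    and "2*(poly P c1 - poly P c2) = k*(c2-c1)^3"
    and "2*(poly P 1 - poly P c2) = k*(1-c2)^2*(2*(1-c2) + 3*(c2-c1))"
    and "poly (pderiv P) c1 = 0" and "poly (pderiv P) c2 = 0"
    and "poly P 0 = 0"
    and "k \<noteq> 0 \<Longrightarrow> degree P = 3"
  unfolding P_def by (simp_all add: field_simps power2_eq_square power3_eq_cube pderiv_pCons)

lemma uniq:
  fixes f g :: "real poly" and v1 v2 c1 c2 e1 e2 :: real
  assumes "v1 > v2" "v2 < 1"
  and "degree f = 3" "poly f 0 = 0" "poly f 1 = 1"
    "0 < c1" "c1 < c2" "c2 < 1"
    "poly (pderiv f) c1 = 0" "poly (pderiv f) c2 = 0"
    "poly f c1 = v1" "poly f c2 = v2"
  and "degree g = 3" "poly g 0 = 0" "poly g 1 = 1"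
    "0 < e1" "e1 < e2" "e2 < 1"
    "poly (pderiv g) e1 = 0" "poly (pderiv g) e2 = 0"
    "poly g e1 = v1" "poly g e2 = v2"
  shows "f = g"
proof -
  note F = params[OF assms(3-12)]
  note G = params[OF assms(13-22)]
  define d where "d = c2 - c1"
  define d' where "d' = e2 - e1"
  have dp: "d > 0" "d' > 0" using assms d_def d'_def by auto
  define x where "x = c1/d"
  define y where "y = (1-c2)/d"
  define x' where "x' = e1/d'"
  define y' where "y' = (1-e2)/d'"
  have nn: "x \<ge> 0" "y \<ge> 0" "x' \<ge> 0" "y' \<ge> 0" using dp assms x_def y_def x'_def y'_def by auto
  have kf: "coeff f 3 * d^3 = 2*(v1-v2)" using F(2) d_def by simp
  have kg: "coeff g 3 * d'^3 = 2*(v1-v2)" using G(2) d'_def by simp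
  have pos: "2*(v1-v2) \<noteq> 0" using assms by simp
  have "2*(v1-v2) * gg x = 2*(v1-v2) * gg x'"
    using F(3) G(3) kf kg d_def d'_def x_def x'_def by simp
  then have xx: "x = x'" using gg_inj nn pos by simp
  have "2*(v1-v2) * gg y = 2*(v1-v2) * gg y'"
    using F(4) G(4) kf kg d_def d'_def y_def y'_def by simp
  then have yy: "y = y'" using gg_inj nn pos by simp
  have "d*x = c1" "d*y = 1-c2" "d'*x' = e1" "d'*y' = 1-e2" using dp by (simp_all add: x_def y_def x'_def y'_def)
  moreover have "d*(1+x+y) = d + d*x + d*y" "d'*(1+x'+y') = d' + d'*x' + d'*y'" by (simp_all add: algebra_simps)
  ultimately have "d*(1+x+y) = 1" "d'*(1+x'+y') = 1" using d_def d'_def by linarith+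
  then have "d = 1/(1+x+y)" "d' = 1/(1+x+y)" using nn xx yy by (simp_all add: eq_divide_eq)
  then have dd: "d = d'" by simp
  have c1e: "c1 = e1" using xx dd dp x_def x'_def by simp
  have c2e: "c2 = e2" using c1e dd d_def d'_def by simp
  have "coeff f 3 * d^3 = coeff g 3 * d^3" using kf kg dd by simp
  then have "coeff f 3 = coeff g 3" using dp by simp
  then show ?thesis using F(1) G(1) c1e c2e by metis
qed

theorem lemma1:
  fixes v1 v2 :: real
  assumes "1 \<ge> v1" and "v1 > v2" and "v2 \<ge> 0"
  shows "\<exists>!f :: real poly.
           degree f = 3 \<and> poly f 0 = 0 \<and> poly f 1 = 1 \<and>
           (\<exists>c1 c2. 0 < c1 \<and> c1 < c2 \<and> c2 < 1 \<and>
              poly (pderiv f) c1 = 0 \<and> poly (pderiv f) c2 = 0 \<and>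
              poly f c1 = v1 \<and> poly f c2 = v2)"
proof (rule ex_ex1I)
  have vp: "v1 - v2 > 0" using assms by simp
  obtain x where x: "x > 0" "gg x = v1/(v1-v2)" using gg_surj[of "v1/(v1-v2)"] vp assms by auto
  obtain y where y: "y > 0" "gg y = (1-v2)/(v1-v2)" using gg_surj[of "(1-v2)/(v1-v2)"] vp assms by auto
  define d where "d = 1/(1+x+y)"
  have dp: "d > 0" using x y d_def by simp
  have d1: "d*(1+x+y) = 1" using x y d_def by simp
  define c1 where "c1 = x*d"
  define c2 where "c2 = x*d + d"
  define k where "k = 2*(v1-v2)/d^3"
  have kd: "k*d^3 = 2*(v1-v2)" using k_def dp by simp
  define P where "P = [:0, 3*k*c1*c2, -3/2*k*(c1+c2), k:]"
  note I = form_ids[of k c1 c2, folded P_def]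
  have t: "1 - c2 = y*d" using d1 c2_def by (simp add: algebra_simps)
  have s: "c2 - c1 = d" using c2_def c1_def by simp
  have "2*poly P c1 = k*c1^2*(3*c2-c1)" by (rule I(1))
  also have "\<dots> = k*d^3*gg x" unfolding gg_def c1_def c2_def
    by (simp add: algebra_simps power2_eq_square power3_eq_cube)
  also have "\<dots> = 2*(v1-v2)*(v1/(v1-v2))" using kd x(2) by simp
  also have "\<dots> = 2*v1" using vp by (simp add: field_simps)
  finally have P1: "poly P c1 = v1" by simp
  have "2*(poly P c1 - poly P c2) = k*d^3" using I(2) s by simp
  then have P2: "poly P c2 = v2" using kd P1 by simp
  have "2*(poly P 1 - poly P c2) = k*(y*d)^2*(2*(y*d) + 3*d)" using I(3) unfolding t s .
  also have "\<dots> = k*d^3*gg y" unfolding gg_def by (simp add: algebra_simps power2_eq_square power3_eq_cube)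
  also have "\<dots> = 2*(v1-v2)*((1-v2)/(v1-v2))" using kd y(2) by simp
  also have "\<dots> = 2*(1-v2)" using vp by (simp add: field_simps)
  finally have P3: "poly P 1 = 1" using P2 by simp
  have "k \<noteq> 0" using kd vp by auto
  then have "degree P = 3" using I(7) by simp
  moreover have "y*d > 0" "x*d > 0" using x y dp by simp_all
  moreover have "0 < c1" "c1 < c2" "c2 < 1" using calculation dp c1_def c2_def t by auto
  ultimately show "\<exists>f. degree f = 3 \<and> poly f 0 = 0 \<and> poly f 1 = 1 \<and>
           (\<exists>c1 c2. 0 < c1 \<and> c1 < c2 \<and> c2 < 1 \<and>
              poly (pderiv f) c1 = 0 \<and> poly (pderiv f) c2 = 0 \<and>
              poly f c1 = v1 \<and> poly f c2 = v2)"
    using I(4,5,6) P1 P2 P3 by blast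
next
  fix f g :: "real poly"
  assume "degree f = 3 \<and> poly f 0 = 0 \<and> poly f 1 = 1 \<and>
           (\<exists>c1 c2. 0 < c1 \<and> c1 < c2 \<and> c2 < 1 \<and>
              poly (pderiv f) c1 = 0 \<and> poly (pderiv f) c2 = 0 \<and>
              poly f c1 = v1 \<and> poly f c2 = v2)"
    "degree g = 3 \<and> poly g 0 = 0 \<and> poly g 1 = 1 \<and>
           (\<exists>c1 c2. 0 < c1 \<and> c1 < c2 \<and> c2 < 1 \<and>
              poly (pderiv g) c1 = 0 \<and> poly (pderiv g) c2 = 0 \<and>
              poly g c1 = v1 \<and> poly g c2 = v2)"
  then obtain c1 c2 e1 e2 where H:
    "degree f = 3" "poly f 0 = 0" "poly f 1 = 1"
    "0 < c1" "c1 < c2" "c2 < 1"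
    "poly (pderiv f) c1 = 0" "poly (pderiv f) c2 = 0"
    "poly f c1 = v1" "poly f c2 = v2"
    "degree g = 3" "poly g 0 = 0" "poly g 1 = 1"
    "0 < e1" "e1 < e2" "e2 < 1"
    "poly (pderiv g) e1 = 0" "poly (pderiv g) e2 = 0"
    "poly g e1 = v1" "poly g e2 = v2" by blast
  have vv: "v1 > v2" "v2 < 1" using assms by auto
  show "f = g" by (rule uniq[OF vv H])
qed

end
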